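(* Let $s$ be a degree sequence and $G,H\in\mathcal{P}(s)$. Then $\operatorname{cycles}(G)=\kappa(G)$ if and only if $\operatorname{cycles}(H)=\kappa(H)$.
   Context: Graphs are finite, simple, labeled with vertex set $[n]$; the degree sequence of $G$ is $(d_1,\dots,d_n)$ with $d_i$ the degree of vertex $i$. A pseudoforest is a graph each of whose connected components contains at most one cycle; $\mathcal{P}(s)$ is the set of pseudoforests with degree sequence $s$. $\kappa(G)$ is the number of connected components and $\operatorname{cycles}(G)$ the number of subgraphs of $G$ isomorphic to a cycle. *)

theory Defs
  imports Main
begin

text \<open>Simple labeled graphs on the vertex set [n] = {1..n}, given by their edge
  set: a set of 2-element subsets of [n].\<close>

definition vertices :: "nat \<Rightarrow> nat set" where
  "vertices n = {1..n}"

definition simple_graph :: "nat \<Rightarrow> nat set set \<Rightarrow> bool" where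
  "simple_graph n E \<longleftrightarrow> E \<subseteq> {{u, v} | u v. u \<in> vertices n \<and> v \<in> vertices n \<and> u \<noteq> v}"

definition degree :: "nat set set \<Rightarrow> nat \<Rightarrow> nat" where
  "degree E i = card {e \<in> E. i \<in> e}"

definition degree_sequence :: "nat \<Rightarrow> nat set set \<Rightarrow> nat list" where
  "degree_sequence n E = map (degree E) [1..<n+1]"

definition reach :: "nat \<Rightarrow> nat set set \<Rightarrow> (nat \<times> nat) set" where
  "reach n E = ({(u, v). {u, v} \<in> E}\<^sup>*) \<inter> (vertices n \<times> vertices n)"

definition components :: "nat \<Rightarrow> nat set set \<Rightarrow> nat set set" where
  "components n E = vertices n // reach n E"

definition kappa :: "nat \<Rightarrow> nat set set \<Rightarrow> nat" where
  "kappa n E = card (components n E)"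

text \<open>Subgraphs isomorphic to a cycle C_k (k \<ge> 3): such a subgraph is the image of
  an injective map f from {0..<k} with edges {f i, f (i+1 mod k)}; it is determined
  by its edge set (its vertex set being the union of its edges).\<close>
definition cycle_subgraphs :: "nat set set \<Rightarrow> nat set set set" where
  "cycle_subgraphs E = {C. C \<subseteq> E \<and> (\<exists>k f. k \<ge> 3 \<and> inj_on f {0..<k} \<and>
       C = (\<lambda>i. {f i, f (Suc i mod k)}) ` {0..<k})}"

definition cycles :: "nat set set \<Rightarrow> nat" where
  "cycles E = card (cycle_subgraphs E)"

definition pseudoforest :: "nat \<Rightarrow> nat set set \<Rightarrow> bool" where
  "pseudoforest n E \<longleftrightarrow> simple_graph n E \<and>
     (\<forall>X \<in> components n E. card {C \<in> cycle_subgraphs E. \<Union>C \<subseteq> X} \<le> 1)"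

definition pseudoforests_deg :: "nat list \<Rightarrow> nat set set set" where
  "pseudoforests_deg s = {E. pseudoforest (length s) E \<and> degree_sequence (length s) E = s}"

end

theory Submission
  imports Defs
begin


definition adj :: "nat set set \<Rightarrow> (nat \<times> nat) set" where
  "adj E = {(u, v). {u, v} \<in> E}"

lemma reach_adj: "reach n E = (adj E)\<^sup>* \<inter> (vertices n \<times> vertices n)"
  unfolding reach_def adj_def by simp

lemma sym_adj: "sym (adj E)"
  unfolding adj_def sym_def by (auto simp: insert_commute)

lemma rtrancl_adj_sym: "(a, b) \<in> (adj E)\<^sup>* \<Longrightarrow> (b, a) \<in> (adj E)\<^sup>*"
  by (meson sym_adj sym_rtrancl symD)

lemma equiv_reach: "equiv (vertices n) (reach n E)"
  unfolding reach_adj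
  apply (rule equivI)
     apply blast
    apply (auto simp: refl_on_def)[1]
   apply (auto simp: sym_def intro: rtrancl_adj_sym)[1]
  apply (auto simp: trans_def intro: rtrancl_trans)
  done

lemma simple_edge:
  assumes "simple_graph n E" "e \<in> E"
  obtains a b where "e = {a, b}" "a \<noteq> b" "a \<in> vertices n" "b \<in> vertices n"
  using assms unfolding simple_graph_def by blast

lemma adj_simple:
  assumes "simple_graph n E" "(a, b) \<in> adj E"
  shows "a \<in> vertices n \<and> b \<in> vertices n \<and> a \<noteq> b"
proof -
  have "{a, b} \<in> E" using assms(2) by (simp add: adj_def)
  then obtain c d where "{a, b} = {c, d}" "c \<noteq> d" "c \<in> vertices n" "d \<in> vertices n"
    using assms(1) simple_edge by metis
  then show ?thesis by (auto simp: doubleton_eq_iff)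
qed

lemma finite_simple: "simple_graph n E \<Longrightarrow> finite E"
  apply (rule finite_subset[of E "Pow (vertices n)"])
  by (auto simp: simple_graph_def vertices_def)

lemma quotient_merge:
  assumes eq: "equiv V R" and fin: "finite V" and u: "u \<in> V" and v: "v \<in> V" and uv: "(u, v) \<notin> R"
  shows "card (V // (R \<union> ((R``{u} \<union> R``{v}) \<times> (R``{u} \<union> R``{v})))) + 1 = card (V // R)"
proof -
  define A where "A = R``{u} \<union> R``{v}"
  define S where "S = R \<union> A \<times> A"
  have Rsub: "R \<subseteq> V \<times> V" using eq equiv_type by blast
  have cls: "S``{x} = (if x \<in> A then A else R``{x})" if x: "x \<in> V" for x
  proof (cases "x \<in> A")
    case True
    have "R``{x} \<subseteq> A"
    proof
      fix y assume "y \<in> R``{x}"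
      then have "(x, y) \<in> R" by simp
      moreover from True have "(u, x) \<in> R \<or> (v, x) \<in> R" by (auto simp: A_def)
      ultimately show "y \<in> A" using eq unfolding A_def equiv_def trans_def by blast
    qed
    then show ?thesis using True by (auto simp: S_def)
  next
    case False
    then show ?thesis by (auto simp: S_def)
  qed
  have cu: "R``{u} \<in> V//R" "R``{v} \<in> V//R" using u v by (auto intro: quotientI)
  have cne: "R``{u} \<noteq> R``{v}" using eq_equiv_class[OF _ eq v] uv by blast
  have QS: "V//S = insert A (V//R - {R``{u}, R``{v}})"
  proof
    show "V//S \<subseteq> insert A (V//R - {R``{u}, R``{v}})"
    proof
      fix X assume "X \<in> V//S"
      then obtain x where x: "x \<in> V" "X = S``{x}" by (auto elim: quotientE)
      show "X \<in> insert A (V//R - {R``{u}, R``{v}})"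
      proof (cases "x \<in> A")
        case True then show ?thesis using x cls by auto
      next
        case False
        have "x \<in> R``{x}" using equiv_class_self[OF eq x(1)] .
        then have "R``{x} \<noteq> R``{u}" "R``{x} \<noteq> R``{v}" using False by (auto simp: A_def)
        then show ?thesis using x cls False by (auto intro: quotientI)
      qed
    qed
  next
    show "insert A (V//R - {R``{u}, R``{v}}) \<subseteq> V//S"
    proof
      fix X assume X: "X \<in> insert A (V//R - {R``{u}, R``{v}})"
      show "X \<in> V//S"
      proof (cases "X = A")
        case True
        have "u \<in> A" using equiv_class_self[OF eq u] by (auto simp: A_def)
        then have "S``{u} = A" using cls[OF u] by simp
        then show ?thesis using True u by (metis quotientI)
      next
        case False
        then have X2: "X \<in> V//R" "X \<noteq> R``{u}" "X \<noteq> R``{v}" using X by auto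
        then obtain x where x: "x \<in> V" "X = R``{x}" by (auto elim: quotientE)
        have x3: "R``{x} \<noteq> R``{u}" "R``{x} \<noteq> R``{v}" using X2 x by auto
        have "x \<notin> A"
        proof
          assume "x \<in> A"
          then have "(u, x) \<in> R \<or> (v, x) \<in> R" by (auto simp: A_def)
          then show False using x x3 equiv_class_eq[OF eq] by metis
        qed
        then have "S``{x} = X" using cls[OF x(1)] x by simp
        then show ?thesis using x by (metis quotientI)
      qed
    qed
  qed
  have Anot: "A \<notin> V//R - {R``{u}, R``{v}}"
  proof
    assume "A \<in> V//R - {R``{u}, R``{v}}"
    then obtain x where x: "x \<in> V" "A = R``{x}" by (auto elim: quotientE)
    have "u \<in> A" "v \<in> A" using equiv_class_self[OF eq u] equiv_class_self[OF eq v] by (auto simp: A_def)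
    then have "(x, u) \<in> R" "(x, v) \<in> R" using x by auto
    then show False using uv eq unfolding equiv_def sym_def trans_def by blast
  qed
  have finQ: "finite (V//R)" using finite_quotient[OF fin Rsub] .
  have "card (V//S) = card (V//R - {R``{u}, R``{v}}) + 1"
    using QS Anot finQ by simp
  also have "card (V//R - {R``{u}, R``{v}}) = card (V//R) - 2"
    using cu cne finQ by (simp add: card_Diff_subset)
  finally have "card (V//S) = card (V//R) - 2 + 1" .
  moreover have "card (V//R) \<ge> 2"
  proof -
    have "card {R``{u}, R``{v}} = 2" using cne by simp
    moreover have "card {R``{u}, R``{v}} \<le> card (V//R)" using cu finQ by (intro card_mono) auto
    ultimately show ?thesis by simp
  qed
  ultimately show ?thesis unfolding S_def A_def by simp
qed



lemma rtrancl_path: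
  assumes "(x, y) \<in> r\<^sup>*"
  shows "\<exists>xs. distinct xs \<and> xs \<noteq> [] \<and> hd xs = x \<and> last xs = y \<and>
           (\<forall>i. Suc i < length xs \<longrightarrow> (xs!i, xs!Suc i) \<in> r)"
  using assms
proof (induction rule: rtrancl_induct)
  case base
  then show ?case by (intro exI[of _ "[x]"]) auto
next
  case (step y z)
  then obtain xs where xs: "distinct xs" "xs \<noteq> []" "hd xs = x" "last xs = y"
    "\<forall>i. Suc i < length xs \<longrightarrow> (xs!i, xs!Suc i) \<in> r" by blast
  show ?case
  proof (cases "z \<in> set xs")
    case True
    then obtain j where j: "j < length xs" "xs!j = z" by (meson in_set_conv_nth)
    let ?ys = "take (Suc j) xs"
    have "distinct ?ys" using xs by simp
    moreover have "?ys \<noteq> []" using xs by simp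
    moreover have "hd ?ys = x" using xs j by (simp add: hd_take)
    moreover have "last ?ys = z" using j by (subst last_conv_nth) (auto simp: min_def intro: arg_cong[where f="(!) xs"])
    moreover have "\<forall>i. Suc i < length ?ys \<longrightarrow> (?ys!i, ?ys!Suc i) \<in> r" using xs j by auto
    ultimately show ?thesis by blast
  next
    case False
    let ?ys = "xs @ [z]"
    have "distinct ?ys" using xs False by simp
    moreover have "?ys \<noteq> []" by simp
    moreover have "hd ?ys = x" using xs by simp
    moreover have "last ?ys = z" by simp
    moreover have "\<forall>i. Suc i < length ?ys \<longrightarrow> (?ys!i, ?ys!Suc i) \<in> r"
    proof (intro allI impI)
      fix i assume i: "Suc i < length ?ys"
      show "(?ys!i, ?ys!Suc i) \<in> r"
      proof (cases "Suc i < length xs")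
        case True then show ?thesis using xs by (simp add: nth_append)
      next
        case False
        then have "Suc i = length xs" using i by simp
        then have "xs!i = y" using xs by (metis diff_Suc_1 last_conv_nth)
        then show ?thesis using \<open>Suc i = length xs\<close> step.hyps(2) by (simp add: nth_append)
      qed
    qed
    ultimately show ?thesis by blast
  qed
qed

lemma cycle_edge_distinct:
  assumes inj: "inj_on f {0..<k}" and k: "k \<ge> 3" and i: "i < k" and j: "j < k" and ij: "i \<noteq> j"
  shows "{f i, f (Suc i mod k)} \<noteq> {f j, f (Suc j mod k)}"
proof
  assume eq: "{f i, f (Suc i mod k)} = {f j, f (Suc j mod k)}"
  have si: "Suc i mod k < k" "Suc j mod k < k" using k by auto
  have "f i \<noteq> f j" using inj i j ij by (auto dest: inj_onD)
  then have "f i = f (Suc j mod k) \<and> f (Suc i mod k) = f j" using eq by (auto simp: doubleton_eq_iff)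
  then have "i = Suc j mod k" "Suc i mod k = j" using inj i j si by (auto dest: inj_onD)
  then have "i = Suc (Suc i mod k) mod k" by simp
  then have "i = Suc (Suc i) mod k" by (simp add: mod_Suc_eq)
  show False
  proof (cases "Suc (Suc i) < k")
    case True
    then show False using \<open>i = Suc (Suc i) mod k\<close> by simp
  next
    case False
    then have "Suc (Suc i) mod k = (Suc (Suc i) - k) mod k" by (simp add: le_mod_geq)
    also have "\<dots> = Suc (Suc i) - k" using i k by simp
    finally show False using \<open>i = Suc (Suc i) mod k\<close> False k by simp
  qed
qed

lemma seg_reach:
  assumes "\<And>i. a \<le> i \<Longrightarrow> i < b \<Longrightarrow> {f i, f (Suc i)} \<in> E" and "a \<le> b"
  shows "(f a, f b) \<in> (adj E)\<^sup>*"
  using assms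
proof (induction b)
  case 0 then show ?case by simp
next
  case (Suc b)
  show ?case
  proof (cases "a = Suc b")
    case True then show ?thesis by simp
  next
    case False
    then have "(f a, f b) \<in> (adj E)\<^sup>*" using Suc by auto
    moreover have "(f b, f (Suc b)) \<in> adj E" using Suc.prems False by (auto simp: adj_def)
    ultimately show ?thesis by (rule rtrancl_into_rtrancl)
  qed
qed



lemma cycle_conn:
  assumes "C \<subseteq> E" "C = (\<lambda>i. {f i, f (Suc i mod k)}) ` {0..<k}" "i < k"
  shows "(f 0, f i) \<in> (adj E)\<^sup>*"
proof (rule seg_reach[where f=f])
  fix j assume "0 \<le> j" "j < i"
  then have "Suc j mod k = Suc j" using assms(3) by simp
  moreover have "{f j, f (Suc j mod k)} \<in> C" using assms \<open>j < i\<close> by auto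
  ultimately show "{f j, f (Suc j)} \<in> E" using assms(1) by auto
qed simp

lemma cycle_in_comp:
  assumes sg: "simple_graph n E" and C: "C \<in> cycle_subgraphs E" and u: "u \<in> \<Union>C"
  shows "\<Union>C \<subseteq> reach n E `` {u}"
proof
  fix w assume w: "w \<in> \<Union>C"
  obtain k f where kf: "C \<subseteq> E" "k \<ge> 3" "inj_on f {0..<k}" "C = (\<lambda>i. {f i, f (Suc i mod k)}) ` {0..<k}"
    using C unfolding cycle_subgraphs_def by blast
  have vert: "\<exists>i<k. x = f i" if "x \<in> \<Union>C" for x
  proof -
    from that kf(4) obtain i where "i < k" "x = f i \<or> x = f (Suc i mod k)" by auto
    moreover have "Suc i mod k < k" using kf(2) by simp
    ultimately show ?thesis by blast
  qed
  obtain i1 where i1: "i1 < k" "u = f i1" using vert u by blast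
  obtain i2 where i2: "i2 < k" "w = f i2" using vert w by blast
  have "(f 0, u) \<in> (adj E)\<^sup>*" "(f 0, w) \<in> (adj E)\<^sup>*" using cycle_conn[OF kf(1) kf(4)] i1 i2 by auto
  then have "(u, w) \<in> (adj E)\<^sup>*" by (meson rtrancl_adj_sym rtrancl_trans)
  moreover have "u \<in> vertices n" "w \<in> vertices n"
    using u w kf(1) sg by (auto simp: simple_graph_def)
  ultimately show "w \<in> reach n E `` {u}" by (simp add: reach_adj)
qed

lemma cycle_through_edge_reach:
  assumes C: "C \<in> cycle_subgraphs E" and e: "e \<in> C" "e = {u, v}"
  shows "(u, v) \<in> (adj (E - {e}))\<^sup>*"
proof -
  obtain k f where kf: "C \<subseteq> E" "k \<ge> 3" "inj_on f {0..<k}" "C = (\<lambda>i. {f i, f (Suc i mod k)}) ` {0..<k}"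
    using C unfolding cycle_subgraphs_def by blast
  obtain j where j: "j < k" "e = {f j, f (Suc j mod k)}" using e kf(4) by auto
  have oth: "{f i, f (Suc i mod k)} \<in> E - {e}" if "i < k" "i \<noteq> j" for i
  proof -
    have "{f i, f (Suc i mod k)} \<in> E" using kf(1,4) that by auto
    moreover have "{f i, f (Suc i mod k)} \<noteq> e"
      using cycle_edge_distinct[OF kf(3) kf(2) that(1) j(1) that(2)] j(2) by simp
    ultimately show ?thesis by simp
  qed
  have lo: "(f 0, f j) \<in> (adj (E - {e}))\<^sup>*"
  proof (rule seg_reach[where f=f])
    fix i assume "0 \<le> i" "i < j"
    then show "{f i, f (Suc i)} \<in> E - {e}" using oth[of i] j by simp
  qed simp
  have main: "(f (Suc j mod k), f j) \<in> (adj (E - {e}))\<^sup>*"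
  proof (cases "Suc j = k")
    case True
    then show ?thesis using lo by simp
  next
    case False
    then have sj: "Suc j mod k = Suc j" "Suc j < k" using j by auto
    have "(f (Suc j), f (k - 1)) \<in> (adj (E - {e}))\<^sup>*"
    proof (rule seg_reach[where f=f])
      fix i assume "Suc j \<le> i" "i < k - 1"
      then show "{f i, f (Suc i)} \<in> E - {e}" using oth[of i] by simp
    qed (use sj in simp)
    moreover have "(f (k - 1), f 0) \<in> adj (E - {e})"
    proof -
      have "{f (k - 1), f (Suc (k - 1) mod k)} \<in> E - {e}" using oth[of "k - 1"] sj kf(2) by simp
      moreover have "Suc (k - 1) mod k = 0" using kf(2) by simp
      ultimately show ?thesis by (simp add: adj_def)
    qed
    ultimately have "(f (Suc j), f 0) \<in> (adj (E - {e}))\<^sup>*" by (rule rtrancl_into_rtrancl)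
    then have "(f (Suc j), f j) \<in> (adj (E - {e}))\<^sup>*" using lo by (rule rtrancl_trans)
    then show ?thesis using sj by simp
  qed
  from j(2) e(2) have "(u = f j \<and> v = f (Suc j mod k)) \<or> (u = f (Suc j mod k) \<and> v = f j)"
    by (auto simp: doubleton_eq_iff)
  then show ?thesis using main rtrancl_adj_sym by blast
qed

lemma edge_cycle_exists:
  assumes eF: "e \<notin> F" and e: "e = {u, v}" "u \<noteq> v" and r: "(u, v) \<in> (adj F)\<^sup>*"
  shows "\<exists>C \<in> cycle_subgraphs (insert e F). e \<in> C"
proof -
  obtain xs where xs: "distinct xs" "xs \<noteq> []" "hd xs = u" "last xs = v"
    "\<forall>i. Suc i < length xs \<longrightarrow> (xs!i, xs!Suc i) \<in> adj F"
    using rtrancl_path[OF r] by blast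
  define k where "k = length xs"
  have h0: "xs!0 = u" using xs by (simp add: hd_conv_nth)
  have hl: "xs!(k - 1) = v" using xs by (simp add: last_conv_nth k_def)
  have k2: "k \<ge> 2"
  proof (rule ccontr)
    assume "\<not> k \<ge> 2"
    moreover have "k \<noteq> 0" using xs k_def by simp
    ultimately have "k = 1" by simp
    then show False using h0 hl e by simp
  qed
  have k3: "k \<ge> 3"
  proof (rule ccontr)
    assume "\<not> k \<ge> 3"
    then have "k = 2" using k2 by simp
    then have "(u, v) \<in> adj F" using xs(5) h0 hl k_def by (metis One_nat_def diff_Suc_1 lessI numeral_2_eq_2)
    then show False using e eF by (simp add: adj_def)
  qed
  define C where "C = (\<lambda>i. {xs!i, xs!(Suc i mod k)}) ` {0..<k}"
  have "C \<subseteq> insert e F"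
  proof
    fix c assume "c \<in> C"
    then obtain i where i: "i < k" "c = {xs!i, xs!(Suc i mod k)}" by (auto simp: C_def)
    show "c \<in> insert e F"
    proof (cases "Suc i < k")
      case True
      then show ?thesis using xs(5) i k_def by (auto simp: adj_def)
    next
      case False
      then have "Suc i = k" using i by simp
      then have "i = k - 1" "Suc i mod k = 0" by auto
      then show ?thesis using i h0 hl e by auto
    qed
  qed
  moreover have "inj_on ((!) xs) {0..<k}" using xs(1) k_def by (simp add: inj_on_nth)
  moreover have "e \<in> C"
  proof -
    have "Suc (k - 1) mod k = 0" using k3 by simp
    then have "{xs!(k - 1), xs!(Suc (k - 1) mod k)} = e" using h0 hl e by auto
    moreover have "k - 1 < k" using k3 by simp
    ultimately have "{xs!(k - 1), xs!(Suc (k - 1) mod k)} \<in> (\<lambda>i. {xs!i, xs!(Suc i mod k)}) ` {0..<k}"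
      by (intro imageI) simp
    then show ?thesis unfolding C_def using \<open>{xs!(k - 1), xs!(Suc (k - 1) mod k)} = e\<close> by simp
  qed
  moreover note k3
  ultimately have "C \<in> cycle_subgraphs (insert e F)"
    unfolding cycle_subgraphs_def mem_Collect_eq
    apply (intro conjI)
     apply assumption
    apply (rule exI[of _ k], rule exI[of _ "(!) xs"])
    apply (simp add: C_def)
    done
  then show ?thesis using \<open>e \<in> C\<close> by blast
qed

lemma reach_mono: "F \<subseteq> E \<Longrightarrow> reach n F \<subseteq> reach n E"
proof -
  assume "F \<subseteq> E"
  then have "adj F \<subseteq> adj E" unfolding adj_def by blast
  then have "(adj F)\<^sup>* \<subseteq> (adj E)\<^sup>*" by (rule rtrancl_mono)
  then show ?thesis unfolding reach_adj by blast
qed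

definition iscyc :: "nat set set \<Rightarrow> bool" where
  "iscyc C = (\<exists>k f. k \<ge> 3 \<and> inj_on f {0..<k} \<and>
       C = (\<lambda>i. {f i, f (Suc i mod k)}) ` {0..<k})"

lemma cs_alt: "cycle_subgraphs E = {C. C \<subseteq> E \<and> iscyc C}"
  unfolding cycle_subgraphs_def iscyc_def by simp

lemma cs_mono: "F \<subseteq> E \<Longrightarrow> cycle_subgraphs F \<subseteq> cycle_subgraphs E"
  unfolding cycle_subgraphs_def by blast

lemma finite_cs: "finite E \<Longrightarrow> finite (cycle_subgraphs E)"
  by (rule finite_subset[of _ "Pow E"]) (auto simp: cs_alt)

lemma pseudoforest_remove:
  assumes pf: "pseudoforest n (insert e F)"
  shows "pseudoforest n F"
  unfolding pseudoforest_def
proof (intro conjI ballI)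
  show "simple_graph n F" using pf by (auto simp: pseudoforest_def simple_graph_def)
  have sgE: "simple_graph n (insert e F)" using pf by (simp add: pseudoforest_def)
  have fin: "finite (insert e F)" by (rule finite_simple[OF sgE])
  fix X assume "X \<in> components n F"
  then obtain w where w: "w \<in> vertices n" "X = reach n F `` {w}"
    by (auto simp: components_def elim: quotientE)
  define Y where "Y = reach n (insert e F) `` {w}"
  have Y: "Y \<in> components n (insert e F)" using w by (auto simp: components_def Y_def intro: quotientI)
  have "X \<subseteq> Y" using w reach_mono[of F "insert e F" n] by (auto simp: Y_def)
  then have "{C \<in> cycle_subgraphs F. \<Union>C \<subseteq> X} \<subseteq> {C \<in> cycle_subgraphs (insert e F). \<Union>C \<subseteq> Y}"
    using cs_mono[of F "insert e F"] by blast
  moreover have "finite {C \<in> cycle_subgraphs (insert e F). \<Union>C \<subseteq> Y}" using finite_cs[OF fin] by simp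
  ultimately have "card {C \<in> cycle_subgraphs F. \<Union>C \<subseteq> X} \<le> card {C \<in> cycle_subgraphs (insert e F). \<Union>C \<subseteq> Y}"
    by (rule card_mono[rotated])
  also have "\<dots> \<le> 1" using pf Y by (auto simp: pseudoforest_def)
  finally show "card {C \<in> cycle_subgraphs F. \<Union>C \<subseteq> X} \<le> 1" .
qed

lemma cs_split:
  assumes "e \<notin> F" "finite F"
  shows "cycles (insert e F) = cycles F + card {C \<in> cycle_subgraphs (insert e F). e \<in> C}"
proof -
  have "cycle_subgraphs (insert e F) = cycle_subgraphs F \<union> {C \<in> cycle_subgraphs (insert e F). e \<in> C}"
    using assms(1) unfolding cs_alt by blast
  moreover have "cycle_subgraphs F \<inter> {C \<in> cycle_subgraphs (insert e F). e \<in> C} = {}"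
    using assms(1) unfolding cs_alt by blast
  moreover have "finite (cycle_subgraphs (insert e F))" using assms by (simp add: finite_cs)
  moreover have "finite (cycle_subgraphs F)" using assms(2) by (simp add: finite_cs)
  moreover have "finite {C \<in> cycle_subgraphs (insert e F). e \<in> C}"
    using \<open>finite (cycle_subgraphs (insert e F))\<close> by simp
  ultimately show ?thesis unfolding cycles_def
    by (metis card_Un_disjoint)
qed



lemma kappa_empty: "kappa n {} = n"
proof -
  have "reach n {} = Id_on (vertices n)" unfolding reach_adj adj_def by (auto simp: Id_on_def)
  moreover have "vertices n // Id_on (vertices n) = (\<lambda>x. {x}) ` vertices n"
    unfolding quotient_def by auto
  ultimately show ?thesis unfolding kappa_def components_def
    by (simp add: card_image vertices_def)
qed

lemma cycles_empty: "cycles {} = 0"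
proof -
  have "cycle_subgraphs {} = {}" unfolding cycle_subgraphs_def
    by (auto simp: image_is_empty)
  then show ?thesis by (simp add: cycles_def)
qed

lemma main_count:
  assumes "finite E"
  shows "pseudoforest n E \<longrightarrow> cycles E + n = card E + kappa n E"
  using assms
proof (induction E rule: finite_induct)
  case empty
  then show ?case by (simp add: kappa_empty cycles_empty)
next
  case (insert e F)
  show ?case
  proof
    assume pf: "pseudoforest n (insert e F)"
    let ?E = "insert e F"
    have sg: "simple_graph n ?E" using pf by (simp add: pseudoforest_def)
    have IH: "cycles F + n = card F + kappa n F" using insert pseudoforest_remove[OF pf] by blast
    obtain u v where uv: "e = {u, v}" "u \<noteq> v" "u \<in> vertices n" "v \<in> vertices n"
      using simple_edge[OF sg] by blast
    have cardE: "card ?E = card F + 1" using insert by simp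
    have split: "cycles ?E = cycles F + card {C \<in> cycle_subgraphs ?E. e \<in> C}"
      using cs_split insert by blast
    have adjE: "adj ?E = adj F \<union> {(u, v), (v, u)}" using uv by (auto simp: adj_def insert_commute)
    show "cycles ?E + n = card ?E + kappa n ?E"
    proof (cases "(u, v) \<in> (adj F)\<^sup>*")
      case True
      have "(adj ?E)\<^sup>* = (adj F)\<^sup>*"
        using True rtrancl_adj_sym[OF True] adjE by (intro rtrancl_subset) auto
      then have kap: "kappa n ?E = kappa n F" by (simp add: kappa_def components_def reach_adj)
      have "card {C \<in> cycle_subgraphs ?E. e \<in> C} = 1"
      proof -
        define X where "X = reach n ?E `` {u}"
        have X: "X \<in> components n ?E" using uv by (auto simp: components_def X_def intro: quotientI)
        have sub: "{C \<in> cycle_subgraphs ?E. e \<in> C} \<subseteq> {C \<in> cycle_subgraphs ?E. \<Union>C \<subseteq> X}"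
        proof
          fix C assume "C \<in> {C \<in> cycle_subgraphs ?E. e \<in> C}"
          then have C: "C \<in> cycle_subgraphs ?E" "e \<in> C" by auto
          then have "u \<in> \<Union>C" using uv by auto
          then have "\<Union>C \<subseteq> X" unfolding X_def by (rule cycle_in_comp[OF sg C(1)])
          then show "C \<in> {C \<in> cycle_subgraphs ?E. \<Union>C \<subseteq> X}" using C by blast
        qed
        have fin: "finite (cycle_subgraphs ?E)" using insert by (simp add: finite_cs)
        have "card {C \<in> cycle_subgraphs ?E. e \<in> C} \<le> 1"
          using card_mono[OF _ sub] fin pf X by (force simp: pseudoforest_def)
        moreover have "{C \<in> cycle_subgraphs ?E. e \<in> C} \<noteq> {}"
          using edge_cycle_exists[OF insert(2) uv(1,2) True] by blast
        ultimately show ?thesis using fin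
          by (metis (no_types, lifting) One_nat_def card_0_eq finite_subset le_Suc_eq le_zero_eq mem_Collect_eq subsetI)
      qed
      then show ?thesis using split IH cardE kap by simp
    next
      case False
      have none: "{C \<in> cycle_subgraphs ?E. e \<in> C} = {}"
      proof (rule ccontr)
        assume "{C \<in> cycle_subgraphs ?E. e \<in> C} \<noteq> {}"
        then obtain C where "C \<in> cycle_subgraphs ?E" "e \<in> C" by blast
        then have "(u, v) \<in> (adj (?E - {e}))\<^sup>*" using cycle_through_edge_reach uv by blast
        moreover have "?E - {e} = F" using insert by auto
        ultimately show False using False by simp
      qed
      define R' where "R' = reach n F"
      define A where "A = R'``{u} \<union> R'``{v}"
      have eqF: "equiv (vertices n) R'" unfolding R'_def by (rule equiv_reach)
      have eqE: "equiv (vertices n) (reach n ?E)" by (rule equiv_reach)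
      have uvR: "(u, v) \<notin> R'" using False by (simp add: R'_def reach_adj)
      have Aclosed: "b \<in> A" if "a \<in> A" "(a, b) \<in> R' \<or> (b, a) \<in> R'" for a b
        using that eqF unfolding A_def equiv_def sym_def trans_def by blast
      have AV: "A \<subseteq> vertices n" using eqF unfolding A_def equiv_def refl_on_def by blast
      have reachE: "reach n ?E = R' \<union> A \<times> A"
      proof
        show "reach n ?E \<subseteq> R' \<union> A \<times> A"
        proof
          fix p assume p: "p \<in> reach n ?E"
          obtain x y where xy: "p = (x, y)" by (cases p)
          have "(x, y) \<in> (adj ?E)\<^sup>*" "x \<in> vertices n" using p xy by (auto simp: reach_adj)
          then show "p \<in> R' \<union> A \<times> A" unfolding xy
          proof (induction rule: rtrancl_induct)
            case base
            then show ?case using eqF unfolding equiv_def refl_on_def by blast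
          next
            case (step y z)
            then have IHs: "(x, y) \<in> R' \<union> A \<times> A" by blast
            have yz: "y \<in> vertices n" "z \<in> vertices n" using adj_simple[OF sg step(2)] by auto
            show ?case
            proof (cases "(y, z) \<in> adj F")
              case True
              then have yzR: "(y, z) \<in> R'" using yz by (auto simp: R'_def reach_adj)
              show ?thesis
              proof (cases "(x, y) \<in> R'")
                case True
                then show ?thesis using yzR eqF unfolding equiv_def trans_def by blast
              next
                case False
                then have "x \<in> A" "y \<in> A" using IHs by auto
                then show ?thesis using Aclosed yzR by blast
              qed
            next
              case False
              then have "(y, z) \<in> {(u, v), (v, u)}" using step(2) adjE by auto
              moreover have "u \<in> A" "v \<in> A"
                using equiv_class_self[OF eqF uv(3)] equiv_class_self[OF eqF uv(4)] by (auto simp: A_def)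
              ultimately have yzA: "y \<in> A" "z \<in> A" by auto
              then have "x \<in> A" using IHs Aclosed by blast
              then show ?thesis using yzA by blast
            qed
          qed
        qed
      next
        have Rsub: "R' \<subseteq> reach n ?E" unfolding R'_def by (rule reach_mono) blast
        have uvE: "(u, v) \<in> reach n ?E" using uv adjE by (auto simp: reach_adj)
        have toU: "(u, x) \<in> reach n ?E" if "x \<in> A" for x
        proof -
          from that have "(u, x) \<in> R' \<or> (v, x) \<in> R'" by (auto simp: A_def)
          then show ?thesis using Rsub uvE eqE unfolding equiv_def trans_def by blast
        qed
        show "R' \<union> A \<times> A \<subseteq> reach n ?E"
        proof safe
          fix a b assume "(a, b) \<in> R'" then show "(a, b) \<in> reach n ?E" using Rsub by blast
        next
          fix a b assume "a \<in> A" "b \<in> A"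
          then show "(a, b) \<in> reach n ?E" using toU eqE unfolding equiv_def trans_def sym_def by blast
        qed
      qed
      have "card (vertices n // reach n ?E) + 1 = card (vertices n // R')"
        unfolding reachE A_def
        by (rule quotient_merge[OF eqF _ uv(3) uv(4) uvR]) (simp add: vertices_def)
      then have kap: "kappa n ?E + 1 = kappa n F" by (simp add: kappa_def components_def R'_def)
      show ?thesis using split none IH cardE kap by simp
    qed
  qed
qed

lemma handshake:
  assumes sg: "simple_graph n E"
  shows "sum (degree E) (vertices n) = 2 * card E"
proof -
  have fin: "finite E" using sg by (rule finite_simple)
  have finV: "finite (vertices n)" by (simp add: vertices_def)
  have "sum (degree E) (vertices n) = (\<Sum>i\<in>vertices n. \<Sum>e\<in>E. if i \<in> e then 1 else 0)"
    unfolding degree_def using fin by (simp add: sum.inter_filter[symmetric])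
  also have "\<dots> = (\<Sum>e\<in>E. \<Sum>i\<in>vertices n. if i \<in> e then 1 else 0)" by (rule sum.swap)
  also have "\<dots> = (\<Sum>e\<in>E. card {i \<in> vertices n. i \<in> e})"
    using finV by (simp add: sum.inter_filter[symmetric])
  also have "\<dots> = (\<Sum>e\<in>E. 2)"
  proof (rule sum.cong)
    fix e assume "e \<in> E"
    then obtain a b where "e = {a, b}" "a \<noteq> b" "a \<in> vertices n" "b \<in> vertices n"
      using simple_edge[OF sg] by blast
    then have "{i \<in> vertices n. i \<in> e} = {a, b}" by auto
    then show "card {i \<in> vertices n. i \<in> e} = 2" using \<open>a \<noteq> b\<close> by simp
  qed simp
  finally show ?thesis by simp
qed

lemma card_from_seq:
  assumes "E \<in> pseudoforests_deg s"
  shows "2 * card E = sum_list s"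
proof -
  have sg: "simple_graph (length s) E" and ds: "degree_sequence (length s) E = s"
    using assms by (auto simp: pseudoforests_deg_def pseudoforest_def)
  have "sum_list s = sum_list (map (degree E) [1..<length s + 1])" using ds by (simp add: degree_sequence_def)
  also have "\<dots> = sum (degree E) {1..<length s + 1}" by (simp only: sum_set_upt_conv_sum_list_nat[symmetric] set_upt)
  also have "{1..<length s + 1} = vertices (length s)" by (auto simp: vertices_def)
  finally show ?thesis using handshake[OF sg] by simp
qed

theorem corollary5p3:
  assumes "G \<in> pseudoforests_deg s" and "H \<in> pseudoforests_deg s"
  shows "cycles G = kappa (length s) G \<longleftrightarrow> cycles H = kappa (length s) H"
proof -
  have pG: "pseudoforest (length s) G" and pH: "pseudoforest (length s) H"
    using assms by (auto simp: pseudoforests_deg_def)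
  have fG: "finite G" "finite H" using pG pH finite_simple by (auto simp: pseudoforest_def)
  have cG: "cycles G + length s = card G + kappa (length s) G" using main_count fG pG by blast
  have cH: "cycles H + length s = card H + kappa (length s) H" using main_count fG pH by blast
  have "card G = card H" using card_from_seq[OF assms(1)] card_from_seq[OF assms(2)] by simp
  then show ?thesis using cG cH by linarith
qed


end
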